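(* Let $\alpha_1,\alpha_2,\alpha_3>0$ with $\alpha_1^{-2}=\alpha_2^{-2}+\alpha_3^{-2}$, let $a_1=-\alpha_2\alpha_3/\alpha_1$, $a_2=\alpha_3\alpha_1/\alpha_2$, $a_3=\alpha_1\alpha_2/\alpha_3$, and let $T$ be the real $7\times7$ matrix $$T=\begin{pmatrix}0&-\frac{\alpha_1}{2}&\frac{\alpha_2}{2}&\frac{\alpha_3}{2}&\frac{\alpha_1}{2}&-\frac{\alpha_2}{2}&-\frac{\alpha_3}{2}\\ \alpha_1&-2a_1&0&0&0&-\alpha_3&-\alpha_2\\ \alpha_2&0&-2a_2&0&\alpha_3&0&\alpha_1\\ \alpha_3&0&0&-2a_3&\alpha_2&\alpha_1&0\\ -\alpha_1&0&\alpha_3&\alpha_2&2a_1&0&0\\ -\alpha_2&-\alpha_3&0&-\alpha_1&0&2a_2&0\\ -\alpha_3&-\alpha_2&-\alpha_1&0&0&0&2a_3\end{pmatrix}.$$ Let $\mathbf{a}=(0,\alpha_1,\alpha_2,\alpha_3,\alpha_1,\alpha_2,\alpha_3)^{\mathrm T}$ and let $\lambda>0$ with $\lambda^2=a_2^2-a_1a_3$. Then $T\mathbf{a}=0$, and there exist real constants $b_1,\dots,b_5,c_1,\dots,c_5,d_1,\dots,d_6$ such that the nonzero vectors $\mathbf{b}_+=(b_1,b_2,0,b_3,b_4,0,b_5)^{\mathrm T}$, $\mathbf{b}_-=(b_1,b_4,0,b_5,b_2,0,b_3)^{\mathrm T}$, $\mathbf{c}_+=(c_1,0,c_2,c_3,0,c_4,c_5)^{\mathrm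 T}$, $\mathbf{c}_-=(c_1,0,c_4,c_5,0,c_2,c_3)^{\mathrm T}$, $\mathbf{d}_+=(0,d_1,d_2,d_3,d_4,d_5,d_6)^{\mathrm T}$, $\mathbf{d}_-=(0,d_4,d_5,d_6,d_1,d_2,d_3)^{\mathrm T}$ satisfy $T\mathbf{b}_\pm=\pm\lambda\mathbf{b}_\pm$, $T\mathbf{c}_\pm=\pm\lambda\mathbf{c}_\pm$, $T\mathbf{d}_\pm=\pm3\lambda\mathbf{d}_\pm$, and for each choice of sign the pair $\{\mathbf{b}_\pm,\mathbf{c}_\pm\}$ is linearly independent. *)

theory Defs
  imports "HOL-Analysis.Analysis" "HOL-Library.Numeral_Type"
begin

definition acoef1 :: "real \<Rightarrow> real \<Rightarrow> real \<Rightarrow> real" where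
  "acoef1 \<alpha>1 \<alpha>2 \<alpha>3 = - \<alpha>2 * \<alpha>3 / \<alpha>1"
definition acoef2 :: "real \<Rightarrow> real \<Rightarrow> real \<Rightarrow> real" where
  "acoef2 \<alpha>1 \<alpha>2 \<alpha>3 = \<alpha>3 * \<alpha>1 / \<alpha>2"
definition acoef3 :: "real \<Rightarrow> real \<Rightarrow> real \<Rightarrow> real" where
  "acoef3 \<alpha>1 \<alpha>2 \<alpha>3 = \<alpha>1 * \<alpha>2 / \<alpha>3"

definition Tmat :: "real \<Rightarrow> real \<Rightarrow> real \<Rightarrow> real^7^7" where
  "Tmat \<alpha>1 \<alpha>2 \<alpha>3 =
    (let a1 = acoef1 \<alpha>1 \<alpha>2 \<alpha>3; a2 = acoef2 \<alpha>1 \<alpha>2 \<alpha>3; a3 = acoef3 \<alpha>1 \<alpha>2 \<alpha>3 in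
     vector [
       vector [0, - \<alpha>1/2, \<alpha>2/2, \<alpha>3/2, \<alpha>1/2, - \<alpha>2/2, - \<alpha>3/2],
       vector [\<alpha>1, -2*a1, 0, 0, 0, - \<alpha>3, - \<alpha>2],
       vector [\<alpha>2, 0, -2*a2, 0, \<alpha>3, 0, \<alpha>1],
       vector [\<alpha>3, 0, 0, -2*a3, \<alpha>2, \<alpha>1, 0],
       vector [- \<alpha>1, 0, \<alpha>3, \<alpha>2, 2*a1, 0, 0],
       vector [- \<alpha>2, - \<alpha>3, 0, - \<alpha>1, 0, 2*a2, 0],
       vector [- \<alpha>3, - \<alpha>2, - \<alpha>1, 0, 0, 0, 2*a3]])"

end

theory Submission
  imports Defs
begin

lemma exhaust_7:
  fixes x :: 7
  shows "x = 1 \<or> x = 2 \<or> x = 3 \<or> x = 4 \<or> x = 5 \<or> x = 6 \<or> x = 7"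
proof (induct x)
  case (of_int z)
  then have "z = 0 \<or> z = 1 \<or> z = 2 \<or> z = 3 \<or> z = 4 \<or> z = 5 \<or> z = 6" by fastforce
  then show ?case by auto
qed

lemma UNIV_7: "UNIV = {1, 2, 3, 4, 5, 6, 7::7}"
  using exhaust_7 by auto

lemma sum_7: "sum f (UNIV::7 set) = f 1 + f 2 + f 3 + f 4 + f 5 + f 6 + f 7"
  unfolding UNIV_7 by (simp add: ac_simps)

lemma vector_7:
 "(vector [x1,x2,x3,x4,x5,x6,x7] ::('a::zero)^7)$1 = x1"
 "(vector [x1,x2,x3,x4,x5,x6,x7] ::('a::zero)^7)$2 = x2"
 "(vector [x1,x2,x3,x4,x5,x6,x7] ::('a::zero)^7)$3 = x3"
 "(vector [x1,x2,x3,x4,x5,x6,x7] ::('a::zero)^7)$4 = x4"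
 "(vector [x1,x2,x3,x4,x5,x6,x7] ::('a::zero)^7)$5 = x5"
 "(vector [x1,x2,x3,x4,x5,x6,x7] ::('a::zero)^7)$6 = x6"
 "(vector [x1,x2,x3,x4,x5,x6,x7] ::('a::zero)^7)$7 = x7"
  unfolding vector_def by simp_all

lemma forall_7: "(\<forall>i::7. P i) \<longleftrightarrow> (P 1 \<and> P 2 \<and> P 3 \<and> P 4 \<and> P 5 \<and> P 6 \<and> P 7)"
proof -
  have "(\<forall>i::7. P i) \<longleftrightarrow> (\<forall>i\<in>(UNIV::7 set). P i)" by simp
  also have "\<dots> \<longleftrightarrow> (P 1 \<and> P 2 \<and> P 3 \<and> P 4 \<and> P 5 \<and> P 6 \<and> P 7)" unfolding UNIV_7 by simp
  finally show ?thesis .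
qed

lemma vec7_eq: "((vector [x1,x2,x3,x4,x5,x6,x7] ::('a::zero)^7) = vector [y1,y2,y3,y4,y5,y6,y7])
  \<longleftrightarrow> x1 = y1 \<and> x2 = y2 \<and> x3 = y3 \<and> x4 = y4 \<and> x5 = y5 \<and> x6 = y6 \<and> x7 = y7"
  by (simp only: vec_eq_iff forall_7 vector_7)

lemma vec7_zero: "(0::('a::zero)^7) = vector [0,0,0,0,0,0,0]"
  by (simp only: vec_eq_iff forall_7 vector_7 zero_index vector_scaleR_component)

lemma vec7_scale: "c *\<^sub>R (vector [x1,x2,x3,x4,x5,x6,x7] :: ('a::real_vector)^7) = vector [c *\<^sub>R x1,c *\<^sub>R x2,c *\<^sub>R x3,c *\<^sub>R x4,c *\<^sub>R x5,c *\<^sub>R x6,c *\<^sub>R x7]"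
  by (simp only: vec_eq_iff forall_7 vector_7 zero_index vector_scaleR_component)

lemma vec7_mv: "(M :: real^7^7) *v (vector [x1,x2,x3,x4,x5,x6,x7]) =
  vector [M$1$1*x1+M$1$2*x2+M$1$3*x3+M$1$4*x4+M$1$5*x5+M$1$6*x6+M$1$7*x7,
          M$2$1*x1+M$2$2*x2+M$2$3*x3+M$2$4*x4+M$2$5*x5+M$2$6*x6+M$2$7*x7,
          M$3$1*x1+M$3$2*x2+M$3$3*x3+M$3$4*x4+M$3$5*x5+M$3$6*x6+M$3$7*x7,
          M$4$1*x1+M$4$2*x2+M$4$3*x3+M$4$4*x4+M$4$5*x5+M$4$6*x6+M$4$7*x7,
          M$5$1*x1+M$5$2*x2+M$5$3*x3+M$5$4*x4+M$5$5*x5+M$5$6*x6+M$5$7*x7,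
          M$6$1*x1+M$6$2*x2+M$6$3*x3+M$6$4*x4+M$6$5*x5+M$6$6*x6+M$6$7*x7,
          M$7$1*x1+M$7$2*x2+M$7$3*x3+M$7$4*x4+M$7$5*x5+M$7$6*x6+M$7$7*x7]"
  by (simp only: vec_eq_iff forall_7 vector_7 matrix_vector_mult_def sum_7 vec_lambda_beta)

lemma nzI: "(v::real^7) $ k \<noteq> 0 \<Longrightarrow> v \<noteq> 0" by auto

lemma indep2:
  fixes u v :: "real^7"
  assumes "u $ i \<noteq> 0" "v $ i = 0" "v $ j \<noteq> 0" "u $ j = 0"
  shows "u \<noteq> v \<and> independent {u, v}"
proof -
  have uv: "u \<noteq> v" using assms by auto
  have v0: "v \<noteq> 0" using assms by auto
  have "u \<notin> span {v}"
  proof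
    assume "u \<in> span {v}"
    then obtain c where "u = c *\<^sub>R v" by (auto simp: span_singleton)
    then show False using assms by simp
  qed
  then show ?thesis using uv v0 by (simp add: independent_insert)
qed


lemma certI:
  fixes y z s G A B lhs rhs :: real
  assumes "s^2 = y^2+z^2" "G^2 = y^4+y^2*z^2+z^4"
    "lhs - rhs = A*(s^2-(y^2+z^2)) + B*(G^2-(y^4+y^2*z^2+z^4))"
  shows "lhs = rhs"
  using assms by simp

definition TS :: "real \<Rightarrow> real \<Rightarrow> real \<Rightarrow> real^7^7" where
  "TS y z s = vector [vector [0, -(y*z)/2, s*y/2, s*z/2, (y*z)/2, -s*y/2, -s*z/2],
    vector [y*z, 2* s^2, 0, 0, 0, -s*z, -s*y],
    vector [s*y, 0, -2*z^2, 0, s*z, 0, y*z],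
    vector [s*z, 0, 0, -2*y^2, s*y, y*z, 0],
    vector [-(y*z), 0, s*z, s*y, -2* s^2, 0, 0],
    vector [-s*y, -s*z, 0, -(y*z), 0, 2*z^2, 0],
    vector [-s*z, -s*y, -(y*z), 0, 0, 0, 2*y^2]]"

lemma eig_a:
  fixes y z s G :: real
  assumes s2: "s^2 = y^2+z^2" and G2: "G^2 = y^4+y^2*z^2+z^4"
  shows "TS y z s *v vector [0, y*z, s*y, s*z, y*z, s*y, s*z] = 0 *\<^sub>R vector [0, y*z, s*y, s*z, y*z, s*y, s*z]"
  unfolding TS_def vec7_mv vector_7 vec7_scale vec7_eq real_scaleR_def
  apply (intro conjI)
  subgoal by (rule certI[OF s2 G2, where A="0" and B="0"]) (simp add: field_simps; algebra?)
  apply (rule certI[OF s2 G2, where A="0" and B="0"], algebra)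
  apply (rule certI[OF s2 G2, where A="0" and B="0"], algebra)
  apply (rule certI[OF s2 G2, where A="0" and B="0"], algebra)
  apply (rule certI[OF s2 G2, where A="0" and B="0"], algebra)
  apply (rule certI[OF s2 G2, where A="0" and B="0"], algebra)
  apply (rule certI[OF s2 G2, where A="0" and B="0"], algebra)
  done

lemma eig_bp:
  fixes y z s G :: real
  assumes s2: "s^2 = y^2+z^2" and G2: "G^2 = y^4+y^2*z^2+z^4"
  shows "TS y z s *v vector [(-2*y^2*z - z^3), (y^3+y*z^2+y*G), 0, (s*(y^2-G)), (y^3+y*z^2-y*G), 0, (s*(y^2+G))] = G *\<^sub>R vector [(-2*y^2*z - z^3), (y^3+y*z^2+y*G), 0, (s*(y^2-G)), (y^3+y*z^2-y*G), 0, (s*(y^2+G))]"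
  unfolding TS_def vec7_mv vector_7 vec7_scale vec7_eq real_scaleR_def
  apply (intro conjI)
  subgoal by (rule certI[OF s2 G2, where A="((-1)*z*G)" and B="0"]) (simp add: field_simps; algebra?)
  apply (rule certI[OF s2 G2, where A="((1)*y^3 + (2)*y*z^2 + (1)*y*G)" and B="((-1)*y)"], algebra)
  apply (rule certI[OF s2 G2, where A="0" and B="0"], algebra)
  apply (rule certI[OF s2 G2, where A="0" and B="((1)* s)"], algebra)
  apply (rule certI[OF s2 G2, where A="((-1)*y^3 + (-2)*y*z^2 + (1)*y*G)" and B="((1)*y)"], algebra)
  apply (rule certI[OF s2 G2, where A="0" and B="0"], algebra)
  apply (rule certI[OF s2 G2, where A="0" and B="((-1)* s)"], algebra)
  done

lemma eig_bm:
  fixes y z s G :: real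
  assumes s2: "s^2 = y^2+z^2" and G2: "G^2 = y^4+y^2*z^2+z^4"
  shows "TS y z s *v vector [(-2*y^2*z - z^3), (y^3+y*z^2-y*G), 0, (s*(y^2+G)), (y^3+y*z^2+y*G), 0, (s*(y^2-G))] = (-G) *\<^sub>R vector [(-2*y^2*z - z^3), (y^3+y*z^2-y*G), 0, (s*(y^2+G)), (y^3+y*z^2+y*G), 0, (s*(y^2-G))]"
  unfolding TS_def vec7_mv vector_7 vec7_scale vec7_eq real_scaleR_def
  apply (intro conjI)
  subgoal by (rule certI[OF s2 G2, where A="((1)*z*G)" and B="0"]) (simp add: field_simps; algebra?)
  apply (rule certI[OF s2 G2, where A="((1)*y^3 + (2)*y*z^2 + (-1)*y*G)" and B="((-1)*y)"], algebra)
  apply (rule certI[OF s2 G2, where A="0" and B="0"], algebra)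
  apply (rule certI[OF s2 G2, where A="0" and B="((1)* s)"], algebra)
  apply (rule certI[OF s2 G2, where A="((-1)*y^3 + (-2)*y*z^2 + (-1)*y*G)" and B="((1)*y)"], algebra)
  apply (rule certI[OF s2 G2, where A="0" and B="0"], algebra)
  apply (rule certI[OF s2 G2, where A="0" and B="((-1)* s)"], algebra)
  done

lemma eig_cp:
  fixes y z s G :: real
  assumes s2: "s^2 = y^2+z^2" and G2: "G^2 = y^4+y^2*z^2+z^4"
  shows "TS y z s *v vector [(s*(y^2-z^2)), 0, (y*(G-z^2)), (z*(y^2-G)), 0, (-y*(z^2+G)), (z*(y^2+G))] = G *\<^sub>R vector [(s*(y^2-z^2)), 0, (y*(G-z^2)), (z*(y^2-G)), 0, (-y*(z^2+G)), (z*(y^2+G))]"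
  unfolding TS_def vec7_mv vector_7 vec7_scale vec7_eq real_scaleR_def
  apply (intro conjI)
  subgoal by (rule certI[OF s2 G2, where A="0" and B="0"]) (simp add: field_simps; algebra?)
  apply (rule certI[OF s2 G2, where A="0" and B="0"], algebra)
  apply (rule certI[OF s2 G2, where A="((1)*y^3 + (-1)*y*z^2)" and B="((-1)*y)"], algebra)
  apply (rule certI[OF s2 G2, where A="((1)*y^2*z + (-1)*z^3)" and B="((1)*z)"], algebra)
  apply (rule certI[OF s2 G2, where A="0" and B="0"], algebra)
  apply (rule certI[OF s2 G2, where A="((-1)*y^3 + (1)*y*z^2)" and B="((1)*y)"], algebra)
  apply (rule certI[OF s2 G2, where A="((-1)*y^2*z + (1)*z^3)" and B="((-1)*z)"], algebra)
  done

lemma eig_cm: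
  fixes y z s G :: real
  assumes s2: "s^2 = y^2+z^2" and G2: "G^2 = y^4+y^2*z^2+z^4"
  shows "TS y z s *v vector [(s*(y^2-z^2)), 0, (-y*(z^2+G)), (z*(y^2+G)), 0, (y*(G-z^2)), (z*(y^2-G))] = (-G) *\<^sub>R vector [(s*(y^2-z^2)), 0, (-y*(z^2+G)), (z*(y^2+G)), 0, (y*(G-z^2)), (z*(y^2-G))]"
  unfolding TS_def vec7_mv vector_7 vec7_scale vec7_eq real_scaleR_def
  apply (intro conjI)
  subgoal by (rule certI[OF s2 G2, where A="0" and B="0"]) (simp add: field_simps; algebra?)
  apply (rule certI[OF s2 G2, where A="0" and B="0"], algebra)
  apply (rule certI[OF s2 G2, where A="((1)*y^3 + (-1)*y*z^2)" and B="((-1)*y)"], algebra)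
  apply (rule certI[OF s2 G2, where A="((1)*y^2*z + (-1)*z^3)" and B="((1)*z)"], algebra)
  apply (rule certI[OF s2 G2, where A="0" and B="0"], algebra)
  apply (rule certI[OF s2 G2, where A="((-1)*y^3 + (1)*y*z^2)" and B="((1)*y)"], algebra)
  apply (rule certI[OF s2 G2, where A="((-1)*y^2*z + (1)*z^3)" and B="((-1)*z)"], algebra)
  done

lemma eig_dp:
  fixes y z s G :: real
  assumes s2: "s^2 = y^2+z^2" and G2: "G^2 = y^4+y^2*z^2+z^4"
  shows "TS y z s *v vector [0, ((3*y^6+7*y^4*z^2+7*y^2*z^4+3*z^6) + 3*G*(y^2+z^2)^2), (-s*z*(2*y^4+2*y^2*z^2+3*z^4-3*z^2*G)), (-s*y*(3*y^4+2*y^2*z^2+2*z^4-3*y^2*G)), ((3*y^6+7*y^4*z^2+7*y^2*z^4+3*z^6) - 3*G*(y^2+z^2)^2), (-s*z*(2*y^4+2*y^2*z^2+3*z^4+3*z^2*G)), (-s*y*(3*y^4+2*y^2*z^2+2*z^4+3*y^2*G))] = (3*G) *\<^sub>R vector [0, ((3*y^6+7*y^4*z^2+7*y^2*z^4+3*z^6) + 3*G*(y^2+z^2)^2), (-s*z*(2*y^4+2*y^2*z^2+3*z^4-3*z^2*G)), (-s*y*(3*y^4+2*y^2*z^2+2*z^4-3*y^2*G)), ((3*y^6+7*y^4*z^2+7*y^2*z^4+3*z^6) - 3*G*(y^2+z^2)^2), (-s*z*(2*y^4+2*y^2*z^2+3*z^4+3*z^2*G)), (-s*y*(3*y^4+2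*y^2*z^2+2*z^4+3*y^2*G))]"
  unfolding TS_def vec7_mv vector_7 vec7_scale vec7_eq real_scaleR_def
  apply (intro conjI)
  subgoal by (rule certI[OF s2 G2, where A="((3)*y^3*z*G + (3)*y*z^3*G)" and B="0"]) (simp add: field_simps; algebra?)
  apply (rule certI[OF s2 G2, where A="((9)*y^6 + (18)*y^4*z^2 + (9)*y^4*G + (18)*y^2*z^4 + (12)*y^2*z^2*G + (9)*z^6 + (9)*z^4*G)" and B="((-9)*y^4 + (-18)*y^2*z^2 + (-9)*z^4)"], algebra)
  apply (rule certI[OF s2 G2, where A="0" and B="((-9)*z^3* s)"], algebra)
  apply (rule certI[OF s2 G2, where A="0" and B="((-9)*y^3* s)"], algebra)
  apply (rule certI[OF s2 G2, where A="((-9)*y^6 + (-18)*y^4*z^2 + (9)*y^4*G + (-18)*y^2*z^4 + (12)*y^2*z^2*G + (-9)*z^6 + (9)*z^4*G)" and B="((9)*y^4 + (18)*y^2*z^2 + (9)*z^4)"], algebra)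
  apply (rule certI[OF s2 G2, where A="0" and B="((9)*z^3* s)"], algebra)
  apply (rule certI[OF s2 G2, where A="0" and B="((9)*y^3* s)"], algebra)
  done

lemma eig_dm:
  fixes y z s G :: real
  assumes s2: "s^2 = y^2+z^2" and G2: "G^2 = y^4+y^2*z^2+z^4"
  shows "TS y z s *v vector [0, ((3*y^6+7*y^4*z^2+7*y^2*z^4+3*z^6) - 3*G*(y^2+z^2)^2), (-s*z*(2*y^4+2*y^2*z^2+3*z^4+3*z^2*G)), (-s*y*(3*y^4+2*y^2*z^2+2*z^4+3*y^2*G)), ((3*y^6+7*y^4*z^2+7*y^2*z^4+3*z^6) + 3*G*(y^2+z^2)^2), (-s*z*(2*y^4+2*y^2*z^2+3*z^4-3*z^2*G)), (-s*y*(3*y^4+2*y^2*z^2+2*z^4-3*y^2*G))] = (-3*G) *\<^sub>R vector [0, ((3*y^6+7*y^4*z^2+7*y^2*z^4+3*z^6) - 3*G*(y^2+z^2)^2), (-s*z*(2*y^4+2*y^2*z^2+3*z^4+3*z^2*G)), (-s*y*(3*y^4+2*y^2*z^2+2*z^4+3*y^2*G)), ((3*y^6+7*y^4*z^2+7*y^2*z^4+3*z^6) + 3*G*(y^2+z^2)^2), (-s*z*(2*y^4+2*y^2*z^2+3*z^4-3*z^2*G)), (-s*y*(3*y^4+2*y^2*z^2+2*z^4-3*y^2*G))]"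
  unfolding TS_def vec7_mv vector_7 vec7_scale vec7_eq real_scaleR_def
  apply (intro conjI)
  subgoal by (rule certI[OF s2 G2, where A="((-3)*y^3*z*G + (-3)*y*z^3*G)" and B="0"]) (simp add: field_simps; algebra?)
  apply (rule certI[OF s2 G2, where A="((9)*y^6 + (18)*y^4*z^2 + (-9)*y^4*G + (18)*y^2*z^4 + (-12)*y^2*z^2*G + (9)*z^6 + (-9)*z^4*G)" and B="((-9)*y^4 + (-18)*y^2*z^2 + (-9)*z^4)"], algebra)
  apply (rule certI[OF s2 G2, where A="0" and B="((-9)*z^3* s)"], algebra)
  apply (rule certI[OF s2 G2, where A="0" and B="((-9)*y^3* s)"], algebra)
  apply (rule certI[OF s2 G2, where A="((-9)*y^6 + (-18)*y^4*z^2 + (-9)*y^4*G + (-18)*y^2*z^4 + (-12)*y^2*z^2*G + (-9)*z^6 + (-9)*z^4*G)" and B="((9)*y^4 + (18)*y^2*z^2 + (9)*z^4)"], algebra)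
  apply (rule certI[OF s2 G2, where A="0" and B="((9)*z^3* s)"], algebra)
  apply (rule certI[OF s2 G2, where A="0" and B="((9)*y^3* s)"], algebra)
  done


lemma aux:
  fixes x y z lam :: real
  assumes pos1: "x > 0" and pos2: "y > 0" and pos3: "z > 0"
    and rel: "1 / x^2 = 1 / y^2 + 1 / z^2"
    and lam_pos: "lam > 0"
    and lam_sq: "lam^2 = (acoef2 x y z)^2 - acoef1 x y z * acoef3 x y z"
  shows "Tmat x y z *v (vector [0, x, y, z, x, y, z] :: real^7) = 0
    \<and> (\<exists>b1 b2 b3 b4 b5 c1 c2 c3 c4 c5 d1 d2 d3 d4 d5 d6 :: real.
        let T = Tmat x y z;
            bp = (vector [b1, b2, 0, b3, b4, 0, b5] :: real^7);
            bm = (vector [b1, b4, 0, b5, b2, 0, b3] :: real^7);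
            cp = (vector [c1, 0, c2, c3, 0, c4, c5] :: real^7);
            cm = (vector [c1, 0, c4, c5, 0, c2, c3] :: real^7);
            dp = (vector [0, d1, d2, d3, d4, d5, d6] :: real^7);
            dm = (vector [0, d4, d5, d6, d1, d2, d3] :: real^7)
        in bp \<noteq> 0 \<and> bm \<noteq> 0 \<and> cp \<noteq> 0 \<and> cm \<noteq> 0 \<and> dp \<noteq> 0 \<and> dm \<noteq> 0
         \<and> T *v bp = lam *\<^sub>R bp \<and> T *v bm = (- lam) *\<^sub>R bm
         \<and> T *v cp = lam *\<^sub>R cp \<and> T *v cm = (- lam) *\<^sub>R cm
         \<and> T *v dp = (3 * lam) *\<^sub>R dp \<and> T *v dm = (- 3 * lam) *\<^sub>R dm
         \<and> bp \<noteq> cp \<and> independent {bp, cp}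
         \<and> bm \<noteq> cm \<and> independent {bm, cm})"
proof -
  define s where "s = y*z/x"
  have sp: "s > 0" using pos1 pos2 pos3 by (simp add: s_def)
  have s2: "s^2 = y^2+z^2"
  proof -
    have "s^2 = y^2*z^2*(1/x^2)" by (simp add: s_def power_divide power_mult_distrib)
    also have "\<dots> = y^2*z^2*(1/y^2+1/z^2)" using rel by simp
    also have "\<dots> = y^2+z^2" using pos2 pos3 by (simp add: field_simps)
    finally show ?thesis .
  qed
  have xs: "x = y*z/s" using pos1 pos2 pos3 by (simp add: s_def)
  define G where "G = s*lam"
  have Gp: "G > 0" using sp lam_pos by (simp add: G_def)
  have lam2: "lam^2 = (z^2/s)^2 + y^2"
  proof -
    have "acoef2 x y z = z^2/s" using pos2 sp by (simp add: acoef2_def xs power2_eq_square)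
    moreover have "acoef1 x y z * acoef3 x y z = -(y^2)" using pos1 pos2 pos3
      by (simp add: acoef1_def acoef3_def power2_eq_square)
    ultimately show ?thesis using lam_sq by simp
  qed
  have G2: "G^2 = y^4+y^2*z^2+z^4"
  proof -
    have "G^2 = s^2*lam^2" by (simp add: G_def power_mult_distrib)
    also have "\<dots> = z^4 + s^2*y^2" using sp by (simp add: lam2 field_simps)
    also have "\<dots> = y^4+y^2*z^2+z^4" by (simp add: s2 algebra_simps)
    finally show ?thesis .
  qed
  have Gs: "G < s^2"
  proof -
    have e: "(s^2)^2 - G^2 = y^2*z^2" using G2 s2 by algebra
    have "y^2*z^2 > 0" using pos2 pos3 by simp
    then have "G^2 < (s^2)^2" using e by linarith
    then show ?thesis using power_less_imp_less_base[of G 2 "s^2"] by simp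
  qed
  have Gz: "z^2 < G"
  proof -
    have e: "G^2 - (z^2)^2 = y^4 + y^2*z^2" using G2 by algebra
    have "y^4 + y^2*z^2 > 0" using pos2 pos3 by (simp add: add_pos_pos)
    then have "(z^2)^2 < G^2" using e by linarith
    then show ?thesis using power_less_imp_less_base[of "z^2" 2 G] Gp by simp
  qed
  have TSeq: "TS y z s = s *\<^sub>R Tmat x y z"
    unfolding TS_def Tmat_def Let_def acoef1_def acoef2_def acoef3_def
    using sp pos2 pos3
    by (simp add: vec7_scale vec7_eq xs field_simps power2_eq_square)
  have tr: "Tmat x y z *v v = d *\<^sub>R v" if h: "TS y z s *v v = c *\<^sub>R v" and cd: "c = s*d" for v c d
  proof -
    have "s *\<^sub>R (Tmat x y z *v v) = s *\<^sub>R (d *\<^sub>R v)"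
      using h cd by (simp add: scaleR_matrix_vector_assoc TSeq)
    then show ?thesis using sp by (metis scaleR_cancel_left scaleR_scaleR less_irrefl)
  qed
  have avec: "vector [0, y*z, s*y, s*z, y*z, s*y, s*z] = s *\<^sub>R (vector [0, x, y, z, x, y, z] :: real^7)"
    using sp by (simp add: vec7_scale vec7_eq xs)
  have Ta: "Tmat x y z *v (vector [0, x, y, z, x, y, z] :: real^7) = 0"
  proof -
    have "s *\<^sub>R (s *\<^sub>R (Tmat x y z *v (vector [0, x, y, z, x, y, z] :: real^7))) = 0"
      using eig_a[OF s2 G2] by (simp add: scaleR_matrix_vector_assoc matrix_scaleR_vector_ac TSeq avec)
    then show ?thesis using sp by simp
  qed
  have b2: "y^3+y*z^2+y*G \<noteq> 0"
  proof -
    have "y^3 > 0" "y*z^2 \<ge> 0" "y*G > 0" using pos2 Gp by simp_all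
    then show ?thesis by linarith
  qed
  have b4: "y^3+y*z^2-y*G \<noteq> 0"
  proof -
    have "y^3+y*z^2-y*G = y*(s^2-G)" using s2 by (simp add: algebra_simps power2_eq_square power3_eq_cube)
    then show ?thesis using pos2 Gs by simp
  qed
  have c2: "y*(G-z^2) \<noteq> 0" using pos2 Gz by simp
  have c4: "-y*(z^2+G) \<noteq> 0"
  proof -
    have "z^2+G > 0" using Gp by (simp add: add_nonneg_pos)
    then show ?thesis using pos2 by simp
  qed
  have d1: "PP + 3*G*(y^2+z^2)^2 \<noteq> 0" if "PP = (3*y^6+7*y^4*z^2+7*y^2*z^4+3*z^6)" for PP
  proof -
    have "3*y^6 > 0" "7*y^4*z^2 \<ge> 0" "7*y^2*z^4 \<ge> 0" "3*z^6 \<ge> 0" "3*G*(y^2+z^2)^2 > 0"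
      using pos2 pos3 Gp by simp_all
    then show ?thesis using that by linarith
  qed
  define bp where "bp = (vector [(-2*y^2*z - z^3), (y^3+y*z^2+y*G), 0, (s*(y^2-G)), (y^3+y*z^2-y*G), 0, (s*(y^2+G))] :: real^7)"
  define bm where "bm = (vector [(-2*y^2*z - z^3), (y^3+y*z^2-y*G), 0, (s*(y^2+G)), (y^3+y*z^2+y*G), 0, (s*(y^2-G))] :: real^7)"
  define cp where "cp = (vector [(s*(y^2-z^2)), 0, (y*(G-z^2)), (z*(y^2-G)), 0, (-y*(z^2+G)), (z*(y^2+G))] :: real^7)"
  define cm where "cm = (vector [(s*(y^2-z^2)), 0, (-y*(z^2+G)), (z*(y^2+G)), 0, (y*(G-z^2)), (z*(y^2-G))] :: real^7)"
  define dp where "dp = (vector [0, ((3*y^6+7*y^4*z^2+7*y^2*z^4+3*z^6) + 3*G*(y^2+z^2)^2), (-s*z*(2*y^4+2*y^2*z^2+3*z^4-3*z^2*G)), (-s*y*(3*y^4+2*y^2*z^2+2*z^4-3*y^2*G)), ((3*y^6+7*y^4*z^2+7*y^2*z^4+3*z^6) - 3*G*(y^2+z^2)^2), (-s*z*(2*y^4+2*y^2*z^2+3*z^4+3*z^2*G)), (-s*y*(3*y^4+2*y^2*z^2+2*z^4+3*y^2*G))] :: real^7)"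
  define dm where "dm = (vector [0, ((3*y^6+7*y^4*z^2+7*y^2*z^4+3*z^6) - 3*G*(y^2+z^2)^2), (-s*z*(2*y^4+2*y^2*z^2+3*z^4+3*z^2*G)), (-s*y*(3*y^4+2*y^2*z^2+2*z^4+3*y^2*G)), ((3*y^6+7*y^4*z^2+7*y^2*z^4+3*z^6) + 3*G*(y^2+z^2)^2), (-s*z*(2*y^4+2*y^2*z^2+3*z^4-3*z^2*G)), (-s*y*(3*y^4+2*y^2*z^2+2*z^4-3*y^2*G))] :: real^7)"
  have nz_bp: "bp \<noteq> 0"
    by (rule nzI[of _ 2]) (simp only: bp_def vector_7, rule b2)
  have nz_bm: "bm \<noteq> 0"
    by (rule nzI[of _ 5]) (simp only: bm_def vector_7, rule b2)
  have nz_cp: "cp \<noteq> 0"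
    by (rule nzI[of _ 3]) (simp only: cp_def vector_7, rule c2)
  have nz_cm: "cm \<noteq> 0"
    by (rule nzI[of _ 3]) (simp only: cm_def vector_7, rule c4)
  have nz_dp: "dp \<noteq> 0"
    by (rule nzI[of _ 2]) (simp only: dp_def vector_7, rule d1[OF refl])
  have nz_dm: "dm \<noteq> 0"
    by (rule nzI[of _ 5]) (simp only: dm_def vector_7, rule d1[OF refl])
  have e_bp: "Tmat x y z *v bp = lam *\<^sub>R bp"
    unfolding bp_def by (rule tr[OF eig_bp[OF s2 G2]]) (simp add: G_def)
  have e_bm: "Tmat x y z *v bm = (- lam) *\<^sub>R bm"
    unfolding bm_def by (rule tr[OF eig_bm[OF s2 G2]]) (simp add: G_def)
  have e_cp: "Tmat x y z *v cp = lam *\<^sub>R cp"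
    unfolding cp_def by (rule tr[OF eig_cp[OF s2 G2]]) (simp add: G_def)
  have e_cm: "Tmat x y z *v cm = (- lam) *\<^sub>R cm"
    unfolding cm_def by (rule tr[OF eig_cm[OF s2 G2]]) (simp add: G_def)
  have e_dp: "Tmat x y z *v dp = (3 * lam) *\<^sub>R dp"
    unfolding dp_def by (rule tr[OF eig_dp[OF s2 G2]]) (simp add: G_def)
  have e_dm: "Tmat x y z *v dm = (- 3 * lam) *\<^sub>R dm"
    unfolding dm_def by (rule tr[OF eig_dm[OF s2 G2]]) (simp add: G_def)
  have i1: "bp \<noteq> cp \<and> independent {bp, cp}"
    by (rule indep2[of bp 2 cp 3]) (simp_all only: bp_def cp_def vector_7 b2 c2, simp_all)
  have i2: "bm \<noteq> cm \<and> independent {bm, cm}"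
    by (rule indep2[of bm 2 cm 3]) (simp_all only: bm_def cm_def vector_7 b4 c4, simp_all)
  show ?thesis
    apply (rule conjI[OF Ta])

    apply (rule exI[of _ "-2*y^2*z - z^3"])
    apply (rule exI[of _ "y^3+y*z^2+y*G"])
    apply (rule exI[of _ "s*(y^2-G)"])
    apply (rule exI[of _ "y^3+y*z^2-y*G"])
    apply (rule exI[of _ "s*(y^2+G)"])
    apply (rule exI[of _ "s*(y^2-z^2)"])
    apply (rule exI[of _ "y*(G-z^2)"])
    apply (rule exI[of _ "z*(y^2-G)"])
    apply (rule exI[of _ "-y*(z^2+G)"])
    apply (rule exI[of _ "z*(y^2+G)"])
    apply (rule exI[of _ "(3*y^6+7*y^4*z^2+7*y^2*z^4+3*z^6) + 3*G*(y^2+z^2)^2"])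
    apply (rule exI[of _ "-s*z*(2*y^4+2*y^2*z^2+3*z^4-3*z^2*G)"])
    apply (rule exI[of _ "-s*y*(3*y^4+2*y^2*z^2+2*z^4-3*y^2*G)"])
    apply (rule exI[of _ "(3*y^6+7*y^4*z^2+7*y^2*z^4+3*z^6) - 3*G*(y^2+z^2)^2"])
    apply (rule exI[of _ "-s*z*(2*y^4+2*y^2*z^2+3*z^4+3*z^2*G)"])
    apply (rule exI[of _ "-s*y*(3*y^4+2*y^2*z^2+2*z^4+3*y^2*G)"])
    unfolding Let_def
    apply (fold bp_def bm_def cp_def cm_def dp_def dm_def)
    using nz_bp nz_bm nz_cp nz_cm nz_dp nz_dm e_bp e_bm e_cp e_cm e_dp e_dm i1 i2 by blast
qed


theorem proposition5p5:
  fixes \<alpha>1 \<alpha>2 \<alpha>3 lam :: real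
  assumes pos1: "\<alpha>1 > 0" and pos2: "\<alpha>2 > 0" and pos3: "\<alpha>3 > 0"
    and rel: "1 / \<alpha>1^2 = 1 / \<alpha>2^2 + 1 / \<alpha>3^2"
    and lam_pos: "lam > 0"
    and lam_sq: "lam^2 = (acoef2 \<alpha>1 \<alpha>2 \<alpha>3)^2 - acoef1 \<alpha>1 \<alpha>2 \<alpha>3 * acoef3 \<alpha>1 \<alpha>2 \<alpha>3"
  shows "Tmat \<alpha>1 \<alpha>2 \<alpha>3 *v (vector [0, \<alpha>1, \<alpha>2, \<alpha>3, \<alpha>1, \<alpha>2, \<alpha>3] :: real^7) = 0
    \<and> (\<exists>b1 b2 b3 b4 b5 c1 c2 c3 c4 c5 d1 d2 d3 d4 d5 d6 :: real.
        let T = Tmat \<alpha>1 \<alpha>2 \<alpha>3;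
            bp = (vector [b1, b2, 0, b3, b4, 0, b5] :: real^7);
            bm = (vector [b1, b4, 0, b5, b2, 0, b3] :: real^7);
            cp = (vector [c1, 0, c2, c3, 0, c4, c5] :: real^7);
            cm = (vector [c1, 0, c4, c5, 0, c2, c3] :: real^7);
            dp = (vector [0, d1, d2, d3, d4, d5, d6] :: real^7);
            dm = (vector [0, d4, d5, d6, d1, d2, d3] :: real^7)
        in bp \<noteq> 0 \<and> bm \<noteq> 0 \<and> cp \<noteq> 0 \<and> cm \<noteq> 0 \<and> dp \<noteq> 0 \<and> dm \<noteq> 0
         \<and> T *v bp = lam *\<^sub>R bp \<and> T *v bm = (- lam) *\<^sub>R bm
         \<and> T *v cp = lam *\<^sub>R cp \<and> T *v cm = (- lam) *\<^sub>R cm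
         \<and> T *v dp = (3 * lam) *\<^sub>R dp \<and> T *v dm = (- 3 * lam) *\<^sub>R dm
         \<and> bp \<noteq> cp \<and> independent {bp, cp}
         \<and> bm \<noteq> cm \<and> independent {bm, cm})"
  using aux[OF pos1 pos2 pos3 rel lam_pos lam_sq] .

end
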